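(* Assume $\inf_{x\in X}\mu(B_x(1/2))>0$. If $T\in\mathscr{E}(X)$ is a controlled operator, $\xi$ is a coarse filter on $X$, and $\lim_{x\to\xi}\|\mathbf{1}_{B_x(1)}T\|=0$, then $T\in\mathscr{J}_\xi(X)$.
   Context: $(X,d)$ is a non-compact proper metric space, $B_x(r)=\{y:d(x,y)\le r\}$, and $\mu$ is a Radon measure with support $X$ such that $\mu(B_x(r))>0$ and $\sup_x\mu(B_x(r))<\infty$ for all $r>0$. On $L^2(X,\mu)$, $\mathbf{1}_A$ is multiplication by the characteristic function of measurable $A$. An operator $T$ is controlled if there is $r>0$ such that $\mathbf{1}_FT\mathbf{1}_G=0$ for all closed $F,G$ with $d(F,G)>r$. A kernel $k$ on $X\times X$ is controlled if $k(x,y)=0$ whenever $d(x,y)>r$ for some $r$; $\mathscr{E}(X)$ is the norm closure of the operators $(Op(k)f)(x)=\int k(x,y)f(y)d\mu(y)$, $k$ bounded, uniformly continuous and controlled. For a filter $\xi$, $\lim_{x\to\xi}f(x)=0$ means $\{x:|f(x)|<\varepsilon\}\in\xi$ for all $\varepsilon>0$. With $F^{(r)}=\{x:\inf_{y\notin F}d(x,y)>r\}$, $\xi$ is coarse if $F\in\xi\Rightarrow F^{(r)}\in\xi$ for all $r>0$. $\mathscr{J}_\xi(X)=\{T\in\mathscr{E}(X):\inf_F\|\mathbf{1}_FT\|=0\}$, infimum over measurable $F\in\xi$. *)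

theory Defs
  imports "HOL-Analysis.Analysis"
begin

definition radon_measure :: "'a::metric_space measure \<Rightarrow> bool" where
  "radon_measure M \<longleftrightarrow>
     sets M = sets borel \<and>
     (\<forall>K. compact K \<longrightarrow> emeasure M K < \<infinity>) \<and>
     (\<forall>A\<in>sets borel. emeasure M A = (INF U\<in>{U. open U \<and> A \<subseteq> U}. emeasure M U)) \<and>
     (\<forall>U. open U \<longrightarrow> emeasure M U = (SUP K\<in>{K. compact K \<and> K \<subseteq> U}. emeasure M K))"

definition full_support :: "'a::metric_space measure \<Rightarrow> bool" where
  "full_support M \<longleftrightarrow> (\<forall>U. open U \<and> U \<noteq> {} \<longrightarrow> emeasure M U > 0)"

text \<open>Elements of L^2 are represented by square integrable measurable functions;
  functions agreeing almost everywhere represent the same element.\<close>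
definition L2 :: "'a measure \<Rightarrow> ('a \<Rightarrow> complex) set" where
  "L2 M = {f. f \<in> borel_measurable M \<and> integrable M (\<lambda>x. (cmod (f x))\<^sup>2)}"

definition L2norm :: "'a measure \<Rightarrow> ('a \<Rightarrow> complex) \<Rightarrow> real" where
  "L2norm M f = sqrt (\<integral>x. (cmod (f x))\<^sup>2 \<partial>M)"

definition bounded_op :: "'a measure \<Rightarrow> (('a \<Rightarrow> complex) \<Rightarrow> ('a \<Rightarrow> complex)) \<Rightarrow> bool" where
  "bounded_op M T \<longleftrightarrow>
     (\<forall>f\<in>L2 M. T f \<in> L2 M) \<and>
     (\<forall>f\<in>L2 M. \<forall>g\<in>L2 M. AE x in M. T (\<lambda>y. f y + g y) x = T f x + T g x) \<and>
     (\<forall>f\<in>L2 M. \<forall>c. AE x in M. T (\<lambda>y. c * f y) x = c * T f x) \<and>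
     (\<forall>f\<in>L2 M. \<forall>g\<in>L2 M. (AE x in M. f x = g x) \<longrightarrow> (AE x in M. T f x = T g x)) \<and>
     (\<exists>C. \<forall>f\<in>L2 M. L2norm M (T f) \<le> C * L2norm M f)"

definition opnorm :: "'a measure \<Rightarrow> (('a \<Rightarrow> complex) \<Rightarrow> ('a \<Rightarrow> complex)) \<Rightarrow> real" where
  "opnorm M T = (SUP f\<in>{f\<in>L2 M. L2norm M f \<le> 1}. L2norm M (T f))"

definition ind_op :: "'a set \<Rightarrow> ('a \<Rightarrow> complex) \<Rightarrow> ('a \<Rightarrow> complex)" where
  "ind_op A f = (\<lambda>x. indicator A x * f x)"

definition controlled_op ::
  "'a::metric_space measure \<Rightarrow> (('a \<Rightarrow> complex) \<Rightarrow> ('a \<Rightarrow> complex)) \<Rightarrow> bool" where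
  "controlled_op M T \<longleftrightarrow>
     (\<exists>r>0. \<forall>F G. closed F \<and> closed G \<and> setdist F G > r \<longrightarrow>
        (\<forall>f\<in>L2 M. AE x in M. ind_op F (T (ind_op G f)) x = 0))"

definition controlled_kernel :: "('a::metric_space \<Rightarrow> 'a \<Rightarrow> complex) \<Rightarrow> bool" where
  "controlled_kernel k \<longleftrightarrow> (\<exists>r. \<forall>x y. dist x y > r \<longrightarrow> k x y = 0)"

definition good_kernel :: "('a::metric_space \<Rightarrow> 'a \<Rightarrow> complex) \<Rightarrow> bool" where
  "good_kernel k \<longleftrightarrow>
     (\<exists>B. \<forall>x y. cmod (k x y) \<le> B) \<and>
     uniformly_continuous_on UNIV (\<lambda>(x, y). k x y) \<and>
     controlled_kernel k"

definition Op :: "'a measure \<Rightarrow> ('a \<Rightarrow> 'a \<Rightarrow> complex) \<Rightarrow> ('a \<Rightarrow> complex) \<Rightarrow> ('a \<Rightarrow> complex)" where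
  "Op M k f = (\<lambda>x. \<integral>y. k x y * f y \<partial>M)"

definition E_alg ::
  "'a::metric_space measure \<Rightarrow> (('a \<Rightarrow> complex) \<Rightarrow> ('a \<Rightarrow> complex)) set" where
  "E_alg M = {T. bounded_op M T \<and>
     (\<forall>\<epsilon>>0. \<exists>k. good_kernel k \<and> opnorm M (\<lambda>f x. T f x - Op M k f x) < \<epsilon>)}"

text \<open>F^(r) = {x. inf_{y not in F} d(x,y) > r}, with inf of the empty set = +infinity.\<close>
definition inner_r :: "'a::metric_space set \<Rightarrow> real \<Rightarrow> 'a set" where
  "inner_r F r = {x. \<exists>s>r. \<forall>y. y \<notin> F \<longrightarrow> s \<le> dist x y}"

definition coarse_filter :: "'a::metric_space filter \<Rightarrow> bool" where
  "coarse_filter \<xi> \<longleftrightarrow>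
     (\<forall>F r. r > 0 \<longrightarrow> eventually (\<lambda>x. x \<in> F) \<xi> \<longrightarrow> eventually (\<lambda>x. x \<in> inner_r F r) \<xi>)"

definition J_ideal ::
  "'a::metric_space measure \<Rightarrow> 'a filter \<Rightarrow> (('a \<Rightarrow> complex) \<Rightarrow> ('a \<Rightarrow> complex)) set" where
  "J_ideal M \<xi> = {T. T \<in> E_alg M \<and>
     (INF F\<in>{F. F \<in> sets M \<and> eventually (\<lambda>x. x \<in> F) \<xi>}. opnorm M (\<lambda>f. ind_op F (T f))) = 0}"

end

theory Submission
  imports Defs
begin


lemma L2_meas: "f \<in> L2 M \<Longrightarrow> f \<in> borel_measurable M"
  by (simp add: L2_def)

lemma L2_int: "f \<in> L2 M \<Longrightarrow> integrable M (\<lambda>x. (cmod (f x))\<^sup>2)"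
  by (simp add: L2_def)

lemma cmod_ind_sq: "(cmod (indicator B x * f x))\<^sup>2 = indicator B x * (cmod (f x))\<^sup>2"
  by (simp add: indicator_def)

lemma ind_op_L2:
  assumes "f \<in> L2 M" "B \<in> sets M"
  shows "ind_op B f \<in> L2 M"
proof -
  have m: "f \<in> borel_measurable M" using assms L2_meas by blast
  have "integrable M (\<lambda>x. indicator B x *\<^sub>R (cmod (f x))\<^sup>2)"
    by (rule integrable_mult_indicator) (use assms L2_int in auto)
  then show ?thesis using assms m unfolding L2_def ind_op_def
    by (simp add: cmod_ind_sq)
qed

lemma L2norm_nonneg: "L2norm M f \<ge> 0"
  by (simp add: L2norm_def)

lemma L2norm_ind_le:
  assumes "f \<in> L2 M" "B \<in> sets M"
  shows "L2norm M (ind_op B f) \<le> L2norm M f"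
proof -
  have "(\<integral>x. (cmod (ind_op B f x))\<^sup>2 \<partial>M) \<le> (\<integral>x. (cmod (f x))\<^sup>2 \<partial>M)"
    apply (rule integral_mono)
    using ind_op_L2[OF assms] assms L2_int apply auto[2]
    by (simp add: ind_op_def cmod_ind_sq indicator_def)
  then show ?thesis unfolding L2norm_def by simp
qed

lemma scale_L2:
  assumes "f \<in> L2 M"
  shows "(\<lambda>y. c * f y) \<in> L2 M" and "L2norm M (\<lambda>y. c * f y) = cmod c * L2norm M f"
proof -
  have e: "\<And>x. (cmod (c * f x))\<^sup>2 = (cmod c)\<^sup>2 * (cmod (f x))\<^sup>2"
    by (simp add: norm_mult power_mult_distrib)
  show "(\<lambda>y. c * f y) \<in> L2 M" using assms by (auto simp: L2_def e)
  have "L2norm M (\<lambda>y. c * f y) = sqrt ((cmod c)\<^sup>2 * (\<integral>x. (cmod (f x))\<^sup>2 \<partial>M))"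
    unfolding L2norm_def e by simp
  also have "\<dots> = cmod c * L2norm M f"
    by (simp add: L2norm_def real_sqrt_mult)
  finally show "L2norm M (\<lambda>y. c * f y) = cmod c * L2norm M f" .
qed

lemma L2norm_cong_AE:
  assumes "f \<in> L2 M" "g \<in> L2 M" "AE x in M. f x = g x"
  shows "L2norm M f = L2norm M g"
proof -
  have "(\<integral>x. (cmod (f x))\<^sup>2 \<partial>M) = (\<integral>x. (cmod (g x))\<^sup>2 \<partial>M)"
  proof -
    have [measurable]: "f \<in> borel_measurable M" "g \<in> borel_measurable M" using assms L2_meas by auto
    show ?thesis apply (rule integral_cong_AE)
      apply measurable
    using assms(3) by eventually_elim simp
  qed
  then show ?thesis unfolding L2norm_def by simp
qed

lemma L2norm_sq_nn:
  assumes "h \<in> L2 M" "B \<in> sets M"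
  shows "ennreal ((L2norm M (ind_op B h))\<^sup>2) = (\<integral>\<^sup>+x. indicator B x * ennreal ((cmod (h x))\<^sup>2) \<partial>M)"
proof -
  have i: "integrable M (\<lambda>x. (cmod (ind_op B h x))\<^sup>2)" using ind_op_L2[OF assms] L2_int by blast
  have nn: "0 \<le> (\<integral>x. (cmod (ind_op B h x))\<^sup>2 \<partial>M)" by simp
  have "ennreal ((L2norm M (ind_op B h))\<^sup>2) = ennreal (\<integral>x. (cmod (ind_op B h x))\<^sup>2 \<partial>M)"
    unfolding L2norm_def using nn by simp
  also have "\<dots> = (\<integral>\<^sup>+x. ennreal ((cmod (ind_op B h x))\<^sup>2) \<partial>M)"
    by (rule nn_integral_eq_integral[symmetric]) (use i in auto)
  also have "\<dots> = (\<integral>\<^sup>+x. indicator B x * ennreal ((cmod (h x))\<^sup>2) \<partial>M)"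
    by (intro nn_integral_cong) (simp add: ind_op_def indicator_def)
  finally show ?thesis .
qed


lemma zero_L2: "(\<lambda>x. 0) \<in> L2 M" "L2norm M (\<lambda>x. 0) = 0"
  by (auto simp: L2_def L2norm_def)

lemma T_L2: "bounded_op M T \<Longrightarrow> f \<in> L2 M \<Longrightarrow> T f \<in> L2 M"
  by (simp add: bounded_op_def)

lemma opnorm_bdd:
  assumes T: "bounded_op M T" and B: "B \<in> sets M"
  shows "bdd_above ((\<lambda>f. L2norm M (ind_op B (T f))) ` {f\<in>L2 M. L2norm M f \<le> 1})"
proof -
  obtain C where C: "\<And>f. f \<in> L2 M \<Longrightarrow> L2norm M (T f) \<le> C * L2norm M f"
    using T unfolding bounded_op_def by blast
  show ?thesis
  proof (rule bdd_aboveI2)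
    fix f assume f: "f \<in> {f\<in>L2 M. L2norm M f \<le> 1}"
    have "L2norm M (ind_op B (T f)) \<le> L2norm M (T f)"
      using L2norm_ind_le T_L2[OF T] f B by blast
    also have "\<dots> \<le> C * L2norm M f" using C f by blast
    also have "\<dots> \<le> \<bar>C\<bar> * L2norm M f" by (simp add: L2norm_nonneg mult_right_mono)
    also have "\<dots> \<le> \<bar>C\<bar>" using f by (simp add: mult_left_le)
    finally show "L2norm M (ind_op B (T f)) \<le> \<bar>C\<bar>" .
  qed
qed

lemma opnorm_upper:
  assumes T: "bounded_op M T" and B: "B \<in> sets M" and f: "f \<in> L2 M" "L2norm M f \<le> 1"
  shows "L2norm M (ind_op B (T f)) \<le> opnorm M (\<lambda>f. ind_op B (T f))"
  unfolding opnorm_def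
  by (rule cSUP_upper[OF _ opnorm_bdd[OF T B]]) (use f in auto)

lemma opnorm_nonneg:
  assumes T: "bounded_op M T" and B: "B \<in> sets M"
  shows "0 \<le> opnorm M (\<lambda>f. ind_op B (T f))"
proof -
  have "L2norm M (ind_op B (T (\<lambda>x. 0))) \<le> opnorm M (\<lambda>f. ind_op B (T f))"
    by (rule opnorm_upper[OF T B zero_L2(1)]) (simp add: zero_L2(2))
  then show ?thesis by (rule order_trans[OF L2norm_nonneg])
qed

lemma opnorm_least:
  assumes "\<And>f. f \<in> L2 M \<Longrightarrow> L2norm M f \<le> 1 \<Longrightarrow> L2norm M (ind_op B (T f)) \<le> b"
  shows "opnorm M (\<lambda>f. ind_op B (T f)) \<le> b"
proof -
  have "(\<lambda>x. 0) \<in> {f\<in>L2 M. L2norm M f \<le> 1}" using zero_L2[of M] by simp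
  then show ?thesis unfolding opnorm_def by (intro cSUP_least) (auto intro: assms)
qed

lemma op_bound:
  assumes T: "bounded_op M T" and B: "B \<in> sets M" and f: "f \<in> L2 M"
  shows "L2norm M (ind_op B (T f)) \<le> opnorm M (\<lambda>f. ind_op B (T f)) * L2norm M f"
proof -
  define op where "op = opnorm M (\<lambda>f. ind_op B (T f))"
  have op0: "0 \<le> op" unfolding op_def by (rule opnorm_nonneg[OF T B])
  have key: "L2norm M (ind_op B (T f)) \<le> l * op" if l: "l > 0" "L2norm M f \<le> l" for l
  proof -
    define c where "c = complex_of_real (1 / l)"
    define h where "h = (\<lambda>y. c * f y)"
    have h: "h \<in> L2 M" unfolding h_def by (rule scale_L2(1)[OF f])
    have hn: "L2norm M h = L2norm M f / l" unfolding h_def scale_L2(2)[OF f] c_def using l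
      by (simp add: norm_divide)
    have hn1: "L2norm M h \<le> 1" using hn l by (simp add: divide_le_eq_1)
    have ae: "AE x in M. T h x = c * T f x" unfolding h_def using T f unfolding bounded_op_def by blast
    have "L2norm M (ind_op B (T h)) = L2norm M (\<lambda>x. c * ind_op B (T f) x)"
      apply (rule L2norm_cong_AE)
        apply (rule ind_op_L2[OF T_L2[OF T h] B])
       apply (rule scale_L2(1)[OF ind_op_L2[OF T_L2[OF T f] B]])
      using ae by eventually_elim (simp add: ind_op_def)
    also have "\<dots> = L2norm M (ind_op B (T f)) / l"
      unfolding scale_L2(2)[OF ind_op_L2[OF T_L2[OF T f] B]] c_def using l by (simp add: norm_divide)
    finally have "L2norm M (ind_op B (T f)) / l \<le> op"
      using opnorm_upper[OF T B h hn1] unfolding op_def by simp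
    then show ?thesis using l by (simp add: divide_le_eq mult.commute)
  qed
  show ?thesis unfolding op_def[symmetric]
  proof (rule field_le_epsilon)
    fix e :: real assume e: "e > 0"
    define l where "l = L2norm M f + e / (op + 1)"
    have l0: "l > 0" unfolding l_def using e op0 L2norm_nonneg[of M f] by (simp add: add_nonneg_pos)
    have "L2norm M (ind_op B (T f)) \<le> l * op" by (rule key) (use l0 e op0 in \<open>auto simp: l_def\<close>)
    also have "\<dots> = L2norm M f * op + e * (op / (op + 1))" unfolding l_def by (simp add: algebra_simps)
    also have "\<dots> \<le> L2norm M f * op + e * 1"
      using e op0 by (intro add_left_mono mult_left_mono) auto
    finally show "L2norm M (ind_op B (T f)) \<le> op * L2norm M f + e" by (simp add: mult.commute)
  qed
qed


lemma localize:
  assumes T: "bounded_op M T" and sM: "sets M = sets borel" and r: "r > 0"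
    and ctrl: "\<forall>F G. closed F \<and> closed G \<and> setdist F G > r \<longrightarrow>
        (\<forall>f\<in>L2 M. AE x in M. ind_op F (T (ind_op G f)) x = 0)"
    and g: "g \<in> L2 M" and R: "R \<ge> r + 2"
  shows "AE x in M. ind_op (cball s 1) (T g) x = ind_op (cball s 1) (T (ind_op (ball s R) g)) x"
proof (cases "- ball s R = {}")
  case True
  then have "ball s R = UNIV" by auto
  then have "ind_op (ball s R) g = g" by (auto simp: ind_op_def)
  then show ?thesis by simp
next
  case False
  define G where "G = - ball s R"
  have cG: "closed G" unfolding G_def by auto
  have sd: "r + 1 \<le> setdist (cball s 1) G"
    unfolding le_setdist_iff
  proof (intro conjI ballI impI)
    fix x y assume x: "x \<in> cball s 1" and y: "y \<in> G"
    have "dist s y \<ge> R" using y by (auto simp: G_def)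
    moreover have "dist s x \<le> 1" using x by auto
    moreover have "dist s y \<le> dist s x + dist x y" by (rule dist_triangle)
    ultimately show "r + 1 \<le> dist x y" using R by linarith
  next
    assume "cball s 1 = {} \<or> G = {}"
    then show "r + 1 \<le> 0" using False by (auto simp: G_def)
  qed
  have mB: "ball s R \<in> sets M" "G \<in> sets M" unfolding sM G_def by auto
  have f1: "ind_op (ball s R) g \<in> L2 M" by (rule ind_op_L2[OF g mB(1)])
  have f2: "ind_op G g \<in> L2 M" by (rule ind_op_L2[OF g mB(2)])
  have geq: "g = (\<lambda>y. ind_op (ball s R) g y + ind_op G g y)"
    by (auto simp: ind_op_def G_def indicator_def)
  have ae1: "AE x in M. T (\<lambda>y. ind_op (ball s R) g y + ind_op G g y) x = T (ind_op (ball s R) g) x + T (ind_op G g) x"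
    using T f1 f2 unfolding bounded_op_def by blast
  have ae2: "AE x in M. ind_op (cball s 1) (T (ind_op G g)) x = 0"
    using ctrl cG sd r g by force
  show ?thesis
    using ae1 ae2 unfolding G_def[symmetric]
    by eventually_elim (subst geq, simp add: ind_op_def distrib_left)
qed


lemma card_bound_enn:
  fixes S :: "'a::metric_space set" and M :: "'a measure"
  assumes sM: "sets M = sets borel"
    and cle: "\<And>x. c \<le> emeasure M (cball x (1/2))"
    and sep: "\<forall>p\<in>S. \<forall>q\<in>S. p \<noteq> q \<longrightarrow> dist p q > 1"
    and P: "finite P" "P \<subseteq> S" "P \<subseteq> ball y R"
  shows "of_nat (card P) * c \<le> emeasure M (cball y (R + 1/2))"
proof -
  have "of_nat (card P) * c = (\<Sum>p\<in>P. c)" by simp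
  also have "\<dots> \<le> (\<Sum>p\<in>P. emeasure M (cball p (1/2)))" by (intro sum_mono cle)
  also have "\<dots> = emeasure M (\<Union>p\<in>P. cball p (1/2))"
  proof (rule sum_emeasure)
    show "(\<lambda>p. cball p (1/2)) ` P \<subseteq> sets M" unfolding sM by auto
    show "disjoint_family_on (\<lambda>p. cball p (1 / 2)) P"
      unfolding disjoint_family_on_def
    proof (intro ballI impI)
      fix p q assume pq: "p \<in> P" "q \<in> P" "p \<noteq> q"
      have d: "dist p q > 1" using sep pq P(2) by blast
      show "cball p (1/2) \<inter> cball q (1/2) = {}"
      proof (rule ccontr)
        assume "cball p (1/2) \<inter> cball q (1/2) \<noteq> {}"
        then obtain z where "dist p z \<le> 1/2" "dist q z \<le> 1/2" by auto
        moreover have "dist p q \<le> dist p z + dist q z" by (metis dist_commute dist_triangle)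
        ultimately show False using d by linarith
      qed
    qed
    show "finite P" by fact
  qed
  also have "\<dots> \<le> emeasure M (cball y (R + 1/2))"
  proof (rule emeasure_mono)
    show "(\<Union>p\<in>P. cball p (1/2)) \<subseteq> cball y (R + 1/2)"
    proof
      fix z assume "z \<in> (\<Union>p\<in>P. cball p (1/2))"
      then obtain p where p: "p \<in> P" "dist p z \<le> 1/2" by auto
      have "dist y p < R" using p P(3) by auto
      moreover have "dist y z \<le> dist y p + dist p z" by (rule dist_triangle)
      ultimately show "z \<in> cball y (R + 1/2)" using p by simp
    qed
    show "cball y (R + 1/2) \<in> sets M" unfolding sM by auto
  qed
  finally show ?thesis .
qed

lemma card_bound_real:
  fixes S :: "'a::metric_space set" and M :: "'a measure"
  assumes sM: "sets M = sets borel"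
    and cle: "\<And>x. c \<le> emeasure M (cball x (1/2))" and c0: "0 < c" and cfin: "c < \<infinity>"
    and Ule: "\<And>x. emeasure M (cball x (R + 1/2)) \<le> U" and Ufin: "U < \<infinity>"
    and sep: "\<forall>p\<in>S. \<forall>q\<in>S. p \<noteq> q \<longrightarrow> dist p q > 1"
    and P: "finite P" "P \<subseteq> S" "P \<subseteq> ball y R"
  shows "real (card P) \<le> enn2real U / enn2real c"
proof -
  obtain c' where c': "c = ennreal c'" "c' > 0" using c0 cfin
    by (metis ennreal_cases ennreal_less_zero_iff infinity_ennreal_def less_irrefl not_less_iff_gr_or_eq ennreal_eq_0_iff le_less)
  obtain U' where U': "U = ennreal U'" "U' \<ge> 0" using Ufin
    by (metis ennreal_cases infinity_ennreal_def less_irrefl)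
  have "of_nat (card P) * c \<le> U"
    using card_bound_enn[OF sM cle sep P] Ule order_trans by blast
  then have "ennreal (real (card P) * c') \<le> ennreal U'"
    using c' U' by (simp add: ennreal_mult ennreal_of_nat_eq_real_of_nat)
  then have "real (card P) * c' \<le> U'" using U' by (simp add: ennreal_le_iff)
  then show ?thesis using c' U' by (simp add: le_divide_eq)
qed

lemma finite_sep_ball:
  fixes S :: "'a::metric_space set" and M :: "'a measure"
  assumes sM: "sets M = sets borel"
    and cle: "\<And>x. c \<le> emeasure M (cball x (1/2))" and c0: "0 < c" and cfin: "c < \<infinity>"
    and Ule: "\<And>x. emeasure M (cball x (R + 1/2)) \<le> U" and Ufin: "U < \<infinity>"
    and sep: "\<forall>p\<in>S. \<forall>q\<in>S. p \<noteq> q \<longrightarrow> dist p q > 1"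
  shows "finite (S \<inter> ball y R)" and "real (card (S \<inter> ball y R)) \<le> enn2real U / enn2real c"
proof -
  show fin: "finite (S \<inter> ball y R)"
  proof (rule ccontr)
    assume "infinite (S \<inter> ball y R)"
    then obtain P where P: "finite P" "card P = nat \<lceil>enn2real U / enn2real c\<rceil> + 1" "P \<subseteq> S \<inter> ball y R"
      using infinite_arbitrarily_large by blast
    have "real (card P) \<le> enn2real U / enn2real c"
      by (rule card_bound_real[OF sM cle c0 cfin Ule Ufin sep]) (use P in auto)
    moreover have "real (card P) > enn2real U / enn2real c" using P(2)
      by (simp add: of_nat_add) linarith
    ultimately show False by simp
  qed
  show "real (card (S \<inter> ball y R)) \<le> enn2real U / enn2real c"
    by (rule card_bound_real[OF sM cle c0 cfin Ule Ufin sep]) (use fin in auto)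
qed


lemma max_sep:
  fixes A :: "'a::metric_space set"
  shows "\<exists>S\<subseteq>A. (\<forall>p\<in>S. \<forall>q\<in>S. p \<noteq> q \<longrightarrow> dist p q > 1) \<and> (\<forall>a\<in>A. \<exists>s\<in>S. dist s a \<le> 1)"
proof -
  define sp where "sp S \<longleftrightarrow> (\<forall>p\<in>S. \<forall>q\<in>S. p \<noteq> q \<longrightarrow> dist p q > 1)" for S :: "'a set"
  define Fam where "Fam = {S. S \<subseteq> A \<and> sp S}"
  have chainU: "\<Union>C \<in> Fam" if C: "C \<in> chains Fam" for C
  proof -
    have CF: "C \<subseteq> Fam" and ch: "\<And>X Y. X\<in>C \<Longrightarrow> Y\<in>C \<Longrightarrow> X \<subseteq> Y \<or> Y \<subseteq> X"
      using C unfolding chains_def chain_subset_def by auto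
    have sub: "\<Union>C \<subseteq> A" using CF unfolding Fam_def by auto
    have "sp (\<Union>C)" unfolding sp_def
    proof (intro ballI impI)
      fix p q assume p: "p \<in> \<Union>C" and q: "q \<in> \<Union>C" and pq: "p \<noteq> q"
      obtain X Y where X: "X \<in> C" "p \<in> X" and Y: "Y \<in> C" "q \<in> Y" using p q by auto
      have spX: "sp X" and spY: "sp Y" using CF X Y unfolding Fam_def by auto
      show "dist p q > 1"
      proof (cases "X \<subseteq> Y")
        case True then have "p \<in> Y" using X by auto
        then show ?thesis using spY Y pq unfolding sp_def by simp
      next
        case False then have "Y \<subseteq> X" using ch X Y by blast
        then have "q \<in> X" using Y by auto
        then show ?thesis using spX X pq unfolding sp_def by simp
      qed
    qed
    then show ?thesis using sub unfolding Fam_def by simp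
  qed
  obtain S where S: "S \<in> Fam" and max: "\<And>X. X\<in>Fam \<Longrightarrow> S \<subseteq> X \<Longrightarrow> X = S"
    using Zorn_Lemma[of Fam] chainU by metis
  have SA: "S \<subseteq> A" and spS: "sp S" using S unfolding Fam_def by auto
  have "\<exists>s\<in>S. dist s a \<le> 1" if a: "a \<in> A" for a
  proof (rule ccontr)
    assume "\<not> (\<exists>s\<in>S. dist s a \<le> 1)"
    then have far: "\<And>s. s\<in>S \<Longrightarrow> dist s a > 1" by (simp add: not_le)
    have aS: "a \<notin> S"
    proof
      assume "a \<in> S" then have "dist a a > 1" by (rule far)
      then show False by simp
    qed
    have "sp (insert a S)" unfolding sp_def
    proof (intro ballI impI)
      fix p q assume p: "p \<in> insert a S" and q: "q \<in> insert a S" and pq: "p \<noteq> q"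
      show "dist p q > 1"
      proof (cases "p = a")
        case True
        then have "q \<in> S" using q pq by auto
        then show ?thesis using far[of q] True by (simp add: dist_commute)
      next
        case pa: False
        then have pS: "p \<in> S" using p by auto
        show ?thesis
        proof (cases "q = a")
          case True then show ?thesis using far[OF pS] by simp
        next
          case False then have "q \<in> S" using q by auto
          then show ?thesis using spS pS pq unfolding sp_def by simp
        qed
      qed
    qed
    then have "insert a S \<in> Fam" using SA a unfolding Fam_def by simp
    then have "insert a S = S" using max by blast
    then show False using aS by blast
  qed
  then show ?thesis using SA spS unfolding sp_def by blast
qed


lemma count_ind:
  "(\<integral>\<^sup>+s. indicator (B s) x \<partial>count_space S) = emeasure (count_space S) {s\<in>S. x \<in> B s}"
proof -
  have "(\<integral>\<^sup>+s. indicator (B s) x \<partial>count_space S) = (\<integral>\<^sup>+s. indicator {s. x \<in> B s} s \<partial>count_space S)"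
    by (intro nn_integral_cong) (simp add: indicator_def)
  also have "\<dots> = emeasure (count_space S) ({s. x \<in> B s} \<inter> space (count_space S))"
    by (rule nn_integral_indicator') auto
  also have "{s. x \<in> B s} \<inter> space (count_space S) = {s\<in>S. x \<in> B s}" by auto
  finally show ?thesis .
qed

lemma core:
  fixes M :: "'a::metric_space measure" and S :: "'a set"
  assumes sM: "sets M = sets borel" and T: "bounded_op M T" and r: "r > 0"
    and ctrl: "\<forall>F G. closed F \<and> closed G \<and> setdist F G > r \<longrightarrow>
        (\<forall>f\<in>L2 M. AE x in M. ind_op F (T (ind_op G f)) x = 0)"
    and cS: "countable S"
    and Smult: "\<And>x. finite (S \<inter> ball x (r + 2)) \<and> real (card (S \<inter> ball x (r + 2))) \<le> K"
    and K0: "K \<ge> 0"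
    and opS: "\<And>s. s \<in> S \<Longrightarrow> opnorm M (\<lambda>f. ind_op (cball s 1) (T f)) \<le> \<epsilon>" and e0: "\<epsilon> \<ge> 0"
    and FS: "F = (\<Union>s\<in>S. cball s 1)" and Fm: "F \<in> sets M" and g: "g \<in> L2 M"
  shows "(L2norm M (ind_op F (T g)))\<^sup>2 \<le> \<epsilon>\<^sup>2 * K * (L2norm M g)\<^sup>2"
proof -
  define R where "R = r + 2"
  define q where "q x = ennreal ((cmod (T g x))\<^sup>2)" for x
  define p where "p x = ennreal ((cmod (g x))\<^sup>2)" for x
  have Tg: "T g \<in> L2 M" by (rule T_L2[OF T g])
  have [measurable]: "T g \<in> borel_measurable M" "g \<in> borel_measurable M" using Tg g L2_meas by auto
  have qm[measurable]: "q \<in> borel_measurable M" unfolding q_def by measurable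
  have pm[measurable]: "p \<in> borel_measurable M" unfolding p_def by measurable
  have ballm: "ball s R \<in> sets M" "cball s 1 \<in> sets M" for s unfolding sM by auto
  have per_s: "(\<integral>\<^sup>+x. indicator (cball s 1) x * q x \<partial>M)
      \<le> ennreal (\<epsilon>\<^sup>2) * (\<integral>\<^sup>+x. indicator (ball s R) x * p x \<partial>M)" if s: "s \<in> S" for s
  proof -
    define h where "h = ind_op (ball s R) g"
    have h: "h \<in> L2 M" unfolding h_def by (rule ind_op_L2[OF g ballm(1)])
    have "L2norm M (ind_op (cball s 1) (T g)) = L2norm M (ind_op (cball s 1) (T h))"
      apply (rule L2norm_cong_AE)
        apply (rule ind_op_L2[OF Tg ballm(2)])
       apply (rule ind_op_L2[OF T_L2[OF T h] ballm(2)])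
      unfolding h_def by (rule localize[OF T sM r ctrl g]) (simp add: R_def)
    also have "\<dots> \<le> opnorm M (\<lambda>f. ind_op (cball s 1) (T f)) * L2norm M h"
      by (rule op_bound[OF T ballm(2) h])
    also have "\<dots> \<le> \<epsilon> * L2norm M h"
      by (rule mult_right_mono[OF opS[OF s] L2norm_nonneg])
    finally have le: "L2norm M (ind_op (cball s 1) (T g)) \<le> \<epsilon> * L2norm M h" .
    have "(L2norm M (ind_op (cball s 1) (T g)))\<^sup>2 \<le> (\<epsilon> * L2norm M h)\<^sup>2"
      by (rule power_mono[OF le L2norm_nonneg])
    then have "ennreal ((L2norm M (ind_op (cball s 1) (T g)))\<^sup>2) \<le> ennreal (\<epsilon>\<^sup>2) * ennreal ((L2norm M h)\<^sup>2)"
      by (simp add: ennreal_mult'[symmetric] power_mult_distrib ennreal_leI)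
    moreover have "ennreal ((L2norm M (ind_op (cball s 1) (T g)))\<^sup>2) = (\<integral>\<^sup>+x. indicator (cball s 1) x * q x \<partial>M)"
      unfolding q_def by (rule L2norm_sq_nn[OF Tg ballm(2)])
    moreover have "ennreal ((L2norm M h)\<^sup>2) = (\<integral>\<^sup>+x. indicator (ball s R) x * p x \<partial>M)"
      unfolding p_def h_def by (rule L2norm_sq_nn[OF g ballm(1)])
    ultimately show ?thesis by simp
  qed
  have cover: "indicator F x \<le> (\<integral>\<^sup>+s. indicator (cball s 1) x \<partial>count_space S)" for x
  proof (cases "x \<in> F")
    case True
    then obtain t where t: "t \<in> S" "x \<in> cball t 1" using FS by auto
    have "{s\<in>S. x \<in> cball s 1} \<noteq> {}" using t by auto
    then have "1 \<le> emeasure (count_space S) {s\<in>S. x \<in> cball s 1}"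
      by (subst emeasure_count_space) (auto simp: Suc_le_eq card_gt_0_iff)
    then show ?thesis using True by (simp add: count_ind)
  qed simp
  have mult: "(\<integral>\<^sup>+s. indicator (ball s R) x \<partial>count_space S) \<le> ennreal K" for x
  proof -
    have eq: "{s\<in>S. x \<in> ball s R} = S \<inter> ball x R" by (auto simp: dist_commute)
    have "(\<integral>\<^sup>+s. indicator (ball s R) x \<partial>count_space S) = of_nat (card (S \<inter> ball x R))"
      unfolding count_ind eq using Smult[of x] by (subst emeasure_count_space) (auto simp: R_def)
    also have "\<dots> \<le> ennreal K"
      using Smult[of x] unfolding R_def by (simp add: ennreal_of_nat_eq_real_of_nat ennreal_leI)
    finally show ?thesis .
  qed
  have Ibound: "(\<integral>\<^sup>+s. (\<integral>\<^sup>+x. indicator (ball s R) x * p x \<partial>M) \<partial>count_space S)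
      \<le> ennreal K * ennreal ((L2norm M g)\<^sup>2)"
  proof -
    have "(\<integral>\<^sup>+s. (\<integral>\<^sup>+x. indicator (ball s R) x * p x \<partial>M) \<partial>count_space S)
      = (\<integral>\<^sup>+x. (\<integral>\<^sup>+s. indicator (ball s R) x * p x \<partial>count_space S) \<partial>M)"
      by (rule nn_integral_count_space_nn_integral[OF cS, symmetric]) (use ballm in measurable)
    also have "\<dots> = (\<integral>\<^sup>+x. (\<integral>\<^sup>+s. indicator (ball s R) x \<partial>count_space S) * p x \<partial>M)"
      by (intro nn_integral_cong nn_integral_multc) simp
    also have "\<dots> \<le> (\<integral>\<^sup>+x. ennreal K * p x \<partial>M)"
      by (intro nn_integral_mono mult_right_mono mult) simp
    also have "\<dots> = ennreal K * (\<integral>\<^sup>+x. p x \<partial>M)"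
      by (rule nn_integral_cmult) simp
    also have "(\<integral>\<^sup>+x. p x \<partial>M) = ennreal ((L2norm M g)\<^sup>2)"
    proof -
      have "ennreal ((L2norm M (ind_op UNIV g))\<^sup>2) = (\<integral>\<^sup>+x. indicator UNIV x * p x \<partial>M)"
        unfolding p_def by (rule L2norm_sq_nn[OF g]) (simp add: sM)
      moreover have "ind_op UNIV g = g" by (simp add: ind_op_def)
      ultimately show ?thesis by simp
    qed
    finally show ?thesis .
  qed
  have "ennreal ((L2norm M (ind_op F (T g)))\<^sup>2) = (\<integral>\<^sup>+x. indicator F x * q x \<partial>M)"
    unfolding q_def by (rule L2norm_sq_nn[OF Tg Fm])
  also have "\<dots> \<le> (\<integral>\<^sup>+x. (\<integral>\<^sup>+s. indicator (cball s 1) x \<partial>count_space S) * q x \<partial>M)"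
    by (intro nn_integral_mono mult_right_mono cover) simp
  also have "\<dots> = (\<integral>\<^sup>+x. (\<integral>\<^sup>+s. indicator (cball s 1) x * q x \<partial>count_space S) \<partial>M)"
    by (intro nn_integral_cong nn_integral_multc[symmetric]) simp
  also have "\<dots> = (\<integral>\<^sup>+s. (\<integral>\<^sup>+x. indicator (cball s 1) x * q x \<partial>M) \<partial>count_space S)"
    by (rule nn_integral_count_space_nn_integral[OF cS]) (use ballm in measurable)
  also have "\<dots> \<le> (\<integral>\<^sup>+s. ennreal (\<epsilon>\<^sup>2) * (\<integral>\<^sup>+x. indicator (ball s R) x * p x \<partial>M) \<partial>count_space S)"
    by (intro nn_integral_mono per_s) simp
  also have "\<dots> = ennreal (\<epsilon>\<^sup>2) * (\<integral>\<^sup>+s. (\<integral>\<^sup>+x. indicator (ball s R) x * p x \<partial>M) \<partial>count_space S)"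
    by (rule nn_integral_cmult) simp
  also have "\<dots> \<le> ennreal (\<epsilon>\<^sup>2) * (ennreal K * ennreal ((L2norm M g)\<^sup>2))"
    by (rule mult_left_mono[OF Ibound]) simp
  finally have "ennreal ((L2norm M (ind_op F (T g)))\<^sup>2) \<le> ennreal (\<epsilon>\<^sup>2 * K * (L2norm M g)\<^sup>2)"
    using K0 by (simp add: ennreal_mult'[symmetric] mult.assoc)
  then show ?thesis using K0 by (simp add: ennreal_le_iff)
qed


theorem lemma5p4:
  fixes M :: "'a::heine_borel measure"
    and T :: "('a \<Rightarrow> complex) \<Rightarrow> ('a \<Rightarrow> complex)"
    and \<xi> :: "'a filter"
  assumes noncompact: "\<not> compact (UNIV :: 'a set)"
    and radon: "radon_measure M"
    and supp: "full_support M"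
    and balls_pos: "\<And>x r. r > 0 \<Longrightarrow> emeasure M (cball x r) > 0"
    and balls_unif: "\<And>r. r > 0 \<Longrightarrow> (SUP x. emeasure M (cball x r)) < \<infinity>"
    and inf_half: "(INF x. emeasure M (cball x (1/2))) > 0"
    and T_E: "T \<in> E_alg M"
    and T_ctrl: "controlled_op M T"
    and coarse: "coarse_filter \<xi>"
    and lim: "((\<lambda>x. opnorm M (\<lambda>f. ind_op (cball x 1) (T f))) \<longlongrightarrow> 0) \<xi>"
  shows "T \<in> J_ideal M \<xi>"
proof -
  have sM: "sets M = sets borel" using radon unfolding radon_measure_def by auto
  have T: "bounded_op M T" using T_E unfolding E_alg_def by auto
  obtain r where r: "r > 0" and ctrl: "\<forall>F G. closed F \<and> closed G \<and> setdist F G > r \<longrightarrow>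
        (\<forall>f\<in>L2 M. AE x in M. ind_op F (T (ind_op G f)) x = 0)"
    using T_ctrl unfolding controlled_op_def by blast
  define c where "c = (INF x. emeasure M (cball x (1/2)))"
  have c0: "0 < c" using inf_half unfolding c_def by simp
  have cle: "\<And>x. c \<le> emeasure M (cball x (1/2))" unfolding c_def by (rule INF_lower) simp
  have cfin: "c < \<infinity>"
  proof -
    have cpt: "\<forall>K. compact K \<longrightarrow> emeasure M K < \<infinity>"
      using radon unfolding radon_measure_def by blast
    have "emeasure M (cball undefined (1/2)) < \<infinity>"
      using cpt compact_cball by blast
    then show ?thesis using cle[of undefined] by (rule le_less_trans[rotated])
  qed
  have finU: "(SUP x. emeasure M (cball x (\<rho> + 1/2))) < \<infinity>" if "\<rho> \<ge> 0" for \<rho> :: real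
    by (rule balls_unif) (use that in simp)
  have Ule: "emeasure M (cball x (\<rho> + 1/2)) \<le> (SUP x. emeasure M (cball x (\<rho> + 1/2)))" for x \<rho>
    by (rule SUP_upper) simp
  define U where "U = (SUP x. emeasure M (cball x ((r + 2) + 1/2)))"
  define K where "K = enn2real U / enn2real c"
  have K0: "K \<ge> 0" unfolding K_def by simp
  have key: "\<exists>F. F \<in> sets M \<and> eventually (\<lambda>x. x \<in> F) \<xi> \<and> opnorm M (\<lambda>f. ind_op F (T f)) \<le> \<epsilon> * sqrt K"
    if e: "\<epsilon> > 0" for \<epsilon>
  proof -
    define A where "A = {x. opnorm M (\<lambda>f. ind_op (cball x 1) (T f)) < \<epsilon>}"
    have "eventually (\<lambda>x. dist (opnorm M (\<lambda>f. ind_op (cball x 1) (T f))) 0 < \<epsilon>) \<xi>"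
      using lim e unfolding tendsto_iff by blast
    then have evA: "eventually (\<lambda>x. x \<in> A) \<xi>"
      by (rule eventually_mono) (auto simp: A_def dist_real_def)
    obtain S where SA: "S \<subseteq> A" and sep: "\<forall>p\<in>S. \<forall>q\<in>S. p \<noteq> q \<longrightarrow> dist p q > 1"
      and cov: "\<forall>a\<in>A. \<exists>s\<in>S. dist s a \<le> 1"
      using max_sep[of A] by blast
    define F where "F = (\<Union>s\<in>S. cball s 1)"
    have fin: "finite (S \<inter> ball y \<rho>)" if "\<rho> \<ge> 0" for y \<rho>
      by (rule finite_sep_ball(1)[OF sM cle c0 cfin Ule finU[OF that] sep])
    have Smult: "finite (S \<inter> ball x (r + 2)) \<and> real (card (S \<inter> ball x (r + 2))) \<le> K" for x
      unfolding K_def U_def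
      using finite_sep_ball[OF sM cle c0 cfin Ule finU sep, of "r + 2" x] r by simp
    have cS: "countable S"
    proof -
      have "S = (\<Union>n::nat. S \<inter> ball undefined (real n))"
      proof
        show "S \<subseteq> (\<Union>n::nat. S \<inter> ball undefined (real n))"
        proof
          fix s assume s: "s \<in> S"
          obtain n :: nat where "dist undefined s < real n" using reals_Archimedean2 by blast
          then show "s \<in> (\<Union>n::nat. S \<inter> ball undefined (real n))" using s by auto
        qed
      qed auto
      moreover have "countable (\<Union>n::nat. S \<inter> ball undefined (real n))"
      proof (rule countable_UN)
        fix n :: nat
        show "countable (S \<inter> ball undefined (real n))" by (rule countable_finite[OF fin]) simp
      qed simp
      ultimately show ?thesis by simp
    qed
    have Fm: "F \<in> sets M" unfolding F_def sM
      by (intro sets.countable_UN' cS) auto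
    have AF: "A \<subseteq> F" using cov unfolding F_def by (auto simp: dist_commute)
    have evF: "eventually (\<lambda>x. x \<in> F) \<xi>" using evA by (rule eventually_mono) (use AF in auto)
    have opS: "opnorm M (\<lambda>f. ind_op (cball s 1) (T f)) \<le> \<epsilon>" if "s \<in> S" for s
      using SA that unfolding A_def by auto
    have "opnorm M (\<lambda>f. ind_op F (T f)) \<le> \<epsilon> * sqrt K"
    proof (rule opnorm_least)
      fix g assume g: "g \<in> L2 M" and g1: "L2norm M g \<le> 1"
      have "(L2norm M (ind_op F (T g)))\<^sup>2 \<le> \<epsilon>\<^sup>2 * K * (L2norm M g)\<^sup>2"
        by (rule core[OF sM T r ctrl cS Smult K0 opS _ F_def Fm g]) (use e in auto)
      also have "\<dots> \<le> \<epsilon>\<^sup>2 * K * 1"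
        using g1 K0 L2norm_nonneg[of M g]
        by (intro mult_left_mono power_le_one) auto
      finally have "L2norm M (ind_op F (T g)) \<le> sqrt (\<epsilon>\<^sup>2 * K)"
        by (intro real_le_rsqrt) simp
      also have "\<dots> = \<epsilon> * sqrt K" using e by (simp add: real_sqrt_mult)
      finally show "L2norm M (ind_op F (T g)) \<le> \<epsilon> * sqrt K" .
    qed
    then show ?thesis using Fm evF by blast
  qed
  define Fs where "Fs = {F. F \<in> sets M \<and> eventually (\<lambda>x. x \<in> F) \<xi>}"
  have Fsne: "Fs \<noteq> {}"
  proof -
    have "UNIV \<in> Fs" unfolding Fs_def sM by simp
    then show ?thesis by blast
  qed
  have nn: "\<And>F. F \<in> Fs \<Longrightarrow> 0 \<le> opnorm M (\<lambda>f. ind_op F (T f))"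
    unfolding Fs_def by (rule opnorm_nonneg[OF T]) simp
  have bdd: "bdd_below ((\<lambda>F. opnorm M (\<lambda>f. ind_op F (T f))) ` Fs)"
    by (rule bdd_belowI2[where m=0]) (rule nn)
  have ge: "0 \<le> (INF F\<in>Fs. opnorm M (\<lambda>f. ind_op F (T f)))"
    by (rule cINF_greatest[OF Fsne nn])
  have le: "(INF F\<in>Fs. opnorm M (\<lambda>f. ind_op F (T f))) \<le> 0"
  proof (rule field_le_epsilon)
    fix \<delta> :: real assume d: "\<delta> > 0"
    define \<epsilon> where "\<epsilon> = \<delta> / (sqrt K + 1)"
    have sK: "sqrt K \<ge> 0" using K0 by simp
    have e: "\<epsilon> > 0" unfolding \<epsilon>_def by (intro divide_pos_pos d) (use sK in linarith)
    obtain F where F: "F \<in> sets M" "eventually (\<lambda>x. x \<in> F) \<xi>"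
      and opF: "opnorm M (\<lambda>f. ind_op F (T f)) \<le> \<epsilon> * sqrt K"
      using key[OF e] by blast
    have FFs: "F \<in> Fs" using F unfolding Fs_def by simp
    have "\<epsilon> * sqrt K \<le> \<delta>"
    proof -
      have "\<epsilon> * sqrt K = \<delta> * (sqrt K / (sqrt K + 1))" unfolding \<epsilon>_def by simp
      also have "\<dots> \<le> \<delta> * 1"
      proof (rule mult_left_mono)
        have "sqrt K + 1 > 0" using sK by linarith
        then show "sqrt K / (sqrt K + 1) \<le> 1" by (simp add: divide_le_eq_1)
      qed (use d in simp)
      finally show ?thesis by simp
    qed
    note dd = this
    have "(INF F\<in>Fs. opnorm M (\<lambda>f. ind_op F (T f))) \<le> \<delta>"
      by (rule cINF_lower2[OF bdd FFs]) (use opF dd in linarith)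
    then show "(INF F\<in>Fs. opnorm M (\<lambda>f. ind_op F (T f))) \<le> 0 + \<delta>" by simp
  qed
  show ?thesis unfolding J_ideal_def Fs_def[symmetric] using T_E ge le by simp
qed

end
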